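(* Assume Hypothesis C. Let $L$ be a labeling and $\pi$ the priority rule keyed to $L$. Let $\tilde q(\cdot,\cdot)$ and $\tilde r(\cdot)$ be the finalized data obtained by running the Triangularizer on every bandit in accord with $L$, and define the $S\times S$ matrix $\tilde Q^{\pi}$ and the vector $\tilde R^{\pi}$ by $\tilde Q^{\pi}(s,t)=\tilde q(s_{\pi(s)},j)$ if $t=s_{\setminus\pi(s)}\cup\{j\}$ for some $j\in N_{\pi(s)}$ and $\tilde Q^{\pi}(s,t)=0$ otherwise, and $\tilde R^{\pi}(s)=\tilde r(s_{\pi(s)})$. Then $I-\tilde Q^{\pi}$ is invertible, and $\tilde V^{\pi}:=(I-\tilde Q^{\pi})^{-1}\tilde R^{\pi}$, the unique solution of $\tilde V^{\pi}=\tilde R^{\pi}+\tilde Q^{\pi}\tilde V^{\pi}$, satisfies $\tilde V^{\pi}=V^{\pi}$.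
   Context: There are $K$ bandits with pairwise disjoint finite nonempty state sets $N_1,\dots,N_K$; $N=N_1\cup\dots\cup N_K$; $b(j)$ is the $k$ with $j\in N_k$. Bandit $k$ has real transition rates $q(i,j)$ ($i,j\in N_k$) forming $q^k$ and real rewards $r(i)$ forming $r^k$. A multi-state $s$ contains exactly one state $s_k$ of each $N_k$; $S$ is the set of multi-states; $s_{\setminus k}=s\setminus\{s_k\}$. A stationary nonrandomized policy is a map $\delta:S\to\{1,\dots,K\}$. For such $\delta$, $Q^{\delta}(s,t)=q(s_{\delta(s)},j)$ if $t=s_{\setminus\delta(s)}\cup\{j\}$ with $j\in N_{\delta(s)}$, else $0$; $R^{\delta}(s)=r(s_{\delta(s)})$; $V^{\delta}=(I-Q^{\delta})^{-1}R^{\delta}$. A matrix is transient if its powers tend to $0$ entrywise. Hypothesis C: each $q^k$ is entrywise nonnegative and transient, and at least one of the following holds: (RN) each $q^k$ is substochastic ($\sum_{j\in N_k}q(i,j)\le1$); (RA) $r(i)\le0$ for all $i\in N$; (RS) $r(i)\ge0$ for all $i\in N$. (Under Hypothesis C each $Q^{\delta}$ is transient, so $V^{\delta}$ is well defined.) A labeling is an injective map $L:N\cup\{0\}\to\{1,\dots,|N|+1\}$ with $L(0)=|N|+1$; the priority rule keyed to $L$ is $\pi(s)=\arg\min\{L(s_k):1\le k\le K\}$. Triangularizer for bandit $k$ in accord with $L$: start with the tableau $[(I-q^k),r^k]$ and $M=N_k$; at each stage write the current tableau as $[(I-q),r]$. While $M\neq\emptyset$: let $i\in M$ minimize $L(i)$;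 multiply row $i$ by $1/[1-q(i,i)]$; for each $j\in M\setminus\{i\}$ replace row $j$ by itself plus $q(j,i)$ (current value) times the updated row $i$; remove $i$ from $M$. The final tableau is written $[(I-\tilde q^k),\tilde r^k]$; its entries are the finalized data $\tilde q(i,j)$, $\tilde r(i)$. *)

theory Defs
  imports Complex_Main
begin

definition idm :: "'b \<Rightarrow> 'b \<Rightarrow> real" where
  "idm s t = (if s = t then 1 else 0)"

definition mmult :: "'b set \<Rightarrow> ('b \<Rightarrow> 'b \<Rightarrow> real) \<Rightarrow> ('b \<Rightarrow> 'b \<Rightarrow> real) \<Rightarrow> 'b \<Rightarrow> 'b \<Rightarrow> real" where
  "mmult S A B = (\<lambda>s t. \<Sum>u\<in>S. A s u * B u t)"

fun mpow :: "'b set \<Rightarrow> ('b \<Rightarrow> 'b \<Rightarrow> real) \<Rightarrow> nat \<Rightarrow> 'b \<Rightarrow> 'b \<Rightarrow> real" where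
  "mpow S A 0 = idm"
| "mpow S A (Suc n) = mmult S (mpow S A n) A"

definition transient :: "'b set \<Rightarrow> ('b \<Rightarrow> 'b \<Rightarrow> real) \<Rightarrow> bool" where
  "transient S A = (\<forall>s\<in>S. \<forall>t\<in>S. (\<lambda>n. mpow S A n s t) \<longlonglongrightarrow> 0)"

definition inverse_on :: "'b set \<Rightarrow> ('b \<Rightarrow> 'b \<Rightarrow> real) \<Rightarrow> ('b \<Rightarrow> 'b \<Rightarrow> real) \<Rightarrow> bool" where
  "inverse_on S A B = (\<forall>s\<in>S. \<forall>t\<in>S. mmult S A B s t = idm s t \<and> mmult S B A s t = idm s t)"

definition invertible_on :: "'b set \<Rightarrow> ('b \<Rightarrow> 'b \<Rightarrow> real) \<Rightarrow> bool" where
  "invertible_on S A = (\<exists>B. inverse_on S A B)"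

definition minv :: "'b set \<Rightarrow> ('b \<Rightarrow> 'b \<Rightarrow> real) \<Rightarrow> 'b \<Rightarrow> 'b \<Rightarrow> real" where
  "minv S A = (SOME B. inverse_on S A B)"

definition mvmult :: "'b set \<Rightarrow> ('b \<Rightarrow> 'b \<Rightarrow> real) \<Rightarrow> ('b \<Rightarrow> real) \<Rightarrow> 'b \<Rightarrow> real" where
  "mvmult S A v = (\<lambda>s. \<Sum>t\<in>S. A s t * v t)"

definition value_vec :: "'b set \<Rightarrow> ('b \<Rightarrow> 'b \<Rightarrow> real) \<Rightarrow> ('b \<Rightarrow> real) \<Rightarrow> 'b \<Rightarrow> real" where
  "value_vec S Q R = mvmult S (minv S (\<lambda>s t. idm s t - Q s t)) R"

text \<open>Bandits are indexed by \<open>{1..K}\<close>; \<open>Nb k\<close> is the state set of bandit \<open>k\<close>.\<close>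

definition Nall :: "nat \<Rightarrow> (nat \<Rightarrow> 'a set) \<Rightarrow> 'a set" where
  "Nall K Nb = (\<Union>k\<in>{1..K}. Nb k)"

definition bof :: "nat \<Rightarrow> (nat \<Rightarrow> 'a set) \<Rightarrow> 'a \<Rightarrow> nat" where
  "bof K Nb j = (THE k. k \<in> {1..K} \<and> j \<in> Nb k)"

definition msts :: "nat \<Rightarrow> (nat \<Rightarrow> 'a set) \<Rightarrow> 'a set set" where
  "msts K Nb = {s. s \<subseteq> Nall K Nb \<and> (\<forall>k\<in>{1..K}. card (s \<inter> Nb k) = 1)}"

definition comp :: "(nat \<Rightarrow> 'a set) \<Rightarrow> 'a set \<Rightarrow> nat \<Rightarrow> 'a" where
  "comp Nb s k = (THE x. x \<in> s \<inter> Nb k)"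

definition Qpol :: "(nat \<Rightarrow> 'a set) \<Rightarrow> ('a \<Rightarrow> 'a \<Rightarrow> real) \<Rightarrow> ('a set \<Rightarrow> nat) \<Rightarrow> 'a set \<Rightarrow> 'a set \<Rightarrow> real" where
  "Qpol Nb q \<delta> s t =
     (let k = \<delta> s; x = comp Nb s k in
      if (\<exists>j\<in>Nb k. t = insert j (s - {x}))
      then q x (THE j. j \<in> Nb k \<and> t = insert j (s - {x}))
      else 0)"

definition Rpol :: "(nat \<Rightarrow> 'a set) \<Rightarrow> ('a \<Rightarrow> real) \<Rightarrow> ('a set \<Rightarrow> nat) \<Rightarrow> 'a set \<Rightarrow> real" where
  "Rpol Nb r \<delta> s = r (comp Nb s (\<delta> s))"

definition hypC :: "nat \<Rightarrow> (nat \<Rightarrow> 'a set) \<Rightarrow> ('a \<Rightarrow> 'a \<Rightarrow> real) \<Rightarrow> ('a \<Rightarrow> real) \<Rightarrow> bool" where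
  "hypC K Nb q r =
    ((\<forall>k\<in>{1..K}. (\<forall>i\<in>Nb k. \<forall>j\<in>Nb k. 0 \<le> q i j) \<and> transient (Nb k) q) \<and>
     ((\<forall>k\<in>{1..K}. \<forall>i\<in>Nb k. (\<Sum>j\<in>Nb k. q i j) \<le> 1) \<or>
      (\<forall>i\<in>Nall K Nb. r i \<le> 0) \<or>
      (\<forall>i\<in>Nall K Nb. r i \<ge> 0)))"

text \<open>The extra state \<open>0\<close> is represented by \<open>None\<close>, a state \<open>i\<close> by \<open>Some i\<close>.\<close>
definition is_labeling :: "'a set \<Rightarrow> ('a option \<Rightarrow> nat) \<Rightarrow> bool" where
  "is_labeling N L =
    (inj_on L (insert None (Some ` N)) \<and>
     L ` (insert None (Some ` N)) \<subseteq> {1..card N + 1} \<and>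
     L None = card N + 1)"

definition prio :: "nat \<Rightarrow> (nat \<Rightarrow> 'a set) \<Rightarrow> ('a option \<Rightarrow> nat) \<Rightarrow> 'a set \<Rightarrow> nat" where
  "prio K Nb L s = (ARG_MIN (\<lambda>k. L (Some (comp Nb s k))) k. k \<in> {1..K})"

text \<open>A tableau \<open>[(I - q), r]\<close> is a pair (matrix part \<open>T = I - q\<close>, last column).
  One stage with pivot \<open>i\<close>, where \<open>M'\<close> is \<open>M - {i}\<close>.\<close>
definition tri_step :: "('a \<Rightarrow> 'a \<Rightarrow> real) \<times> ('a \<Rightarrow> real) \<Rightarrow> 'a \<Rightarrow> 'a set
    \<Rightarrow> ('a \<Rightarrow> 'a \<Rightarrow> real) \<times> ('a \<Rightarrow> real)" where
  "tri_step tab i M' =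
    (let T = fst tab; c = snd tab;
         qc = (\<lambda>x y. idm x y - T x y);
         f = 1 / (1 - qc i i);
         rowT = (\<lambda>l. f * T i l);
         rowc = f * c i
     in ((\<lambda>j l. if j = i then rowT l else if j \<in> M' then T j l + qc j i * rowT l else T j l),
         (\<lambda>j. if j = i then rowc else if j \<in> M' then c j + qc j i * rowc else c j)))"

fun tri_loop :: "('a \<Rightarrow> nat) \<Rightarrow> nat \<Rightarrow> 'a set \<Rightarrow> ('a \<Rightarrow> 'a \<Rightarrow> real) \<times> ('a \<Rightarrow> real)
    \<Rightarrow> ('a \<Rightarrow> 'a \<Rightarrow> real) \<times> ('a \<Rightarrow> real)" where
  "tri_loop Lab 0 M tab = tab"
| "tri_loop Lab (Suc n) M tab =
     (if M = {} then tab
      else (let i = (ARG_MIN Lab i. i \<in> M) in tri_loop Lab n (M - {i}) (tri_step tab i (M - {i}))))"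

text \<open>Triangularizer for bandit \<open>k\<close> in accord with \<open>L\<close>, started from \<open>[(I - q^k), r^k]\<close>
  with \<open>M = N_k\<close>; the loop runs while \<open>M \<noteq> {}\<close> (exactly \<open>card (N_k)\<close> stages).\<close>
definition triangularizer :: "('a option \<Rightarrow> nat) \<Rightarrow> (nat \<Rightarrow> 'a set) \<Rightarrow> ('a \<Rightarrow> 'a \<Rightarrow> real)
    \<Rightarrow> ('a \<Rightarrow> real) \<Rightarrow> nat \<Rightarrow> ('a \<Rightarrow> 'a \<Rightarrow> real) \<times> ('a \<Rightarrow> real)" where
  "triangularizer L Nb q r k =
     tri_loop (\<lambda>i. L (Some i)) (card (Nb k)) (Nb k) ((\<lambda>i j. idm i j - q i j), r)"

definition qtil :: "nat \<Rightarrow> (nat \<Rightarrow> 'a set) \<Rightarrow> ('a option \<Rightarrow> nat) \<Rightarrow> ('a \<Rightarrow> 'a \<Rightarrow> real)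
    \<Rightarrow> ('a \<Rightarrow> real) \<Rightarrow> 'a \<Rightarrow> 'a \<Rightarrow> real" where
  "qtil K Nb L q r i j = idm i j - fst (triangularizer L Nb q r (bof K Nb i)) i j"

definition rtil :: "nat \<Rightarrow> (nat \<Rightarrow> 'a set) \<Rightarrow> ('a option \<Rightarrow> nat) \<Rightarrow> ('a \<Rightarrow> 'a \<Rightarrow> real)
    \<Rightarrow> ('a \<Rightarrow> real) \<Rightarrow> 'a \<Rightarrow> real" where
  "rtil K Nb L q r i = snd (triangularizer L Nb q r (bof K Nb i)) i"

end

theory Submission
  imports Defs "Jordan_Normal_Form.Determinant"
begin

lemma inj_invertible:
  fixes A :: "'b \<Rightarrow> 'b \<Rightarrow> real"
  assumes fin: "finite S"
    and inj: "\<And>x. (\<forall>s\<in>S. (\<Sum>t\<in>S. A s t * x t) = 0) \<Longrightarrow> \<forall>s\<in>S. x s = 0"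
  shows "invertible_on S A"
proof -
  define n where "n = card S"
  obtain e where e: "bij_betw e {0..<n} S" using ex_bij_betw_nat_finite[OF fin] n_def by blast
  define ei where "ei = inv_into {0..<n} e"
  have eiS: "\<And>s. s \<in> S \<Longrightarrow> ei s < n \<and> e (ei s) = s"
    using e unfolding ei_def by (metis atLeastLessThan_iff bij_betw_imp_surj_on f_inv_into_f inv_into_into)
  have eS: "\<And>i. i < n \<Longrightarrow> e i \<in> S \<and> ei (e i) = i"
    using e unfolding ei_def by (metis atLeast0LessThan bij_betw_imp_surj_on bij_betw_inv_into_left image_eqI lessThan_iff)
  have reidx: "\<And>g. (\<Sum>t\<in>S. g t) = (\<Sum>j\<in>{0..<n}. g (e j))"
    using sum.reindex_bij_betw[OF e] by metis
  define M where "M = mat n n (\<lambda>(i,j). A (e i) (e j))"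
  have Mc: "M \<in> carrier_mat n n" unfolding M_def by simp
  have "det M \<noteq> 0"
  proof
    assume "det M = 0"
    then obtain v where v: "v \<in> carrier_vec n" "v \<noteq> 0\<^sub>v n" "M *\<^sub>v v = 0\<^sub>v n"
      using det_0_iff_vec_prod_zero_field[OF Mc] by blast
    define x where "x t = v $ (ei t)" for t
    have "\<forall>s\<in>S. (\<Sum>t\<in>S. A s t * x t) = 0"
    proof
      fix s assume s: "s \<in> S"
      have "(\<Sum>t\<in>S. A s t * x t) = (\<Sum>j\<in>{0..<n}. A s (e j) * v $ j)"
        unfolding reidx x_def using eS by simp
      also have "\<dots> = (M *\<^sub>v v) $ (ei s)"
        using eiS[OF s] v(1) unfolding M_def by (simp add: scalar_prod_def)
      also have "\<dots> = 0" using v(3) eiS[OF s] by simp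
      finally show "(\<Sum>t\<in>S. A s t * x t) = 0" .
    qed
    from inj[OF this] have "\<And>j. j < n \<Longrightarrow> v $ j = 0"
      using eS unfolding x_def by metis
    hence "v = 0\<^sub>v n" using v(1) by (intro eq_vecI) auto
    with v(2) show False by simp
  qed
  from det_non_zero_imp_unit[OF Mc this, of "()"]
  obtain B where B: "B \<in> carrier_mat n n" "B * M = 1\<^sub>m n" "M * B = 1\<^sub>m n"
    unfolding Units_def ring_mat_def by auto
  define Bf where "Bf s t = B $$ (ei s, ei t)" for s t
  have "inverse_on S A Bf"
    unfolding inverse_on_def
  proof (intro ballI conjI)
    fix s t assume s: "s \<in> S" and t: "t \<in> S"
    have eq: "(ei s = ei t) = (s = t)" using eiS[OF s] eiS[OF t] by metis
    have "mmult S A Bf s t = (\<Sum>k\<in>{0..<n}. A s (e k) * B $$ (k, ei t))"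
      unfolding mmult_def Bf_def reidx using eS by simp
    also have "\<dots> = (M * B) $$ (ei s, ei t)"
      using eiS[OF s] eiS[OF t] B(1) unfolding M_def by (simp add: scalar_prod_def)
    also have "\<dots> = idm s t" using B(3) eiS[OF s] eiS[OF t] unfolding idm_def by (simp add: eq)
    finally show "mmult S A Bf s t = idm s t" .
    have "mmult S Bf A s t = (\<Sum>k\<in>{0..<n}. B $$ (ei s, k) * A (e k) t)"
      unfolding mmult_def Bf_def reidx using eS by simp
    also have "\<dots> = (B * M) $$ (ei s, ei t)"
      using eiS[OF s] eiS[OF t] B(1) unfolding M_def by (simp add: scalar_prod_def)
    also have "\<dots> = idm s t" using B(2) eiS[OF s] eiS[OF t] unfolding idm_def by (simp add: eq)
    finally show "mmult S Bf A s t = idm s t" .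
  qed
  thus ?thesis unfolding invertible_on_def by blast
qed

lemma mmult_assoc:
  assumes "finite S"
  shows "mmult S (mmult S A B) C s t = mmult S A (mmult S B C) s t"
  unfolding mmult_def
  by (simp add: sum_distrib_left sum_distrib_right mult.assoc) (rule sum.swap)

lemma mmult_cong:
  assumes "\<And>u. u \<in> S \<Longrightarrow> A s u = A' s u" "\<And>u. u \<in> S \<Longrightarrow> B u t = B' u t"
  shows "mmult S A B s t = mmult S A' B' s t"
  unfolding mmult_def using assms by (intro sum.cong) auto

lemma mmult_idm_left: "s \<in> S \<Longrightarrow> finite S \<Longrightarrow> mmult S idm A s t = A s t"
  unfolding mmult_def idm_def
  by (subst sum.cong[OF refl, of _ _ "\<lambda>u. if s = u then A u t else 0"]) auto

lemma mmult_idm_right: "t \<in> S \<Longrightarrow> finite S \<Longrightarrow> mmult S A idm s t = A s t"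
  unfolding mmult_def idm_def
  by (subst sum.cong[OF refl, of _ _ "\<lambda>u. if u = t then A s u else 0"]) auto

lemma mpow_Suc':
  assumes "finite S" "s \<in> S" "t \<in> S"
  shows "mpow S A (Suc n) s t = mmult S A (mpow S A n) s t"
  using assms(2,3)
proof (induction n arbitrary: s t)
  case 0
  then show ?case using assms(1) by (simp add: mmult_idm_left mmult_idm_right)
next
  case (Suc n)
  have "mpow S A (Suc (Suc n)) s t = mmult S (mpow S A (Suc n)) A s t" by simp
  also have "\<dots> = mmult S (mmult S A (mpow S A n)) A s t"
    using Suc by (intro mmult_cong) auto
  also have "\<dots> = mmult S A (mmult S (mpow S A n) A) s t" by (rule mmult_assoc[OF assms(1)])
  finally show ?case by simp
qed

lemma mpow_nonneg:
  assumes "\<forall>i\<in>S. \<forall>j\<in>S. 0 \<le> A i j" "t \<in> S"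
  shows "0 \<le> mpow S A n s t"
  using assms(2)
proof (induction n arbitrary: t)
  case 0 then show ?case by (simp add: idm_def)
next
  case (Suc n) then show ?case using assms(1) by (auto simp: mmult_def intro!: sum_nonneg)
qed

lemma h_exists:
  assumes fin: "finite S" and nn: "\<forall>i\<in>S. \<forall>j\<in>S. 0 \<le> q i j" and tr: "transient S q"
  shows "\<exists>h. (\<forall>j\<in>S. 0 \<le> h j) \<and> (\<forall>j\<in>S. 1 \<le> (\<Sum>l\<in>S. (idm j l - q j l) * h l))"
proof -
  define v where "v n j = (\<Sum>t\<in>S. mpow S q n j t)" for n j
  have "\<forall>j\<in>S. (\<lambda>n. v n j) \<longlonglongrightarrow> 0"
    using tr unfolding transient_def v_def by (auto intro!: tendsto_null_sum)
  have "\<forall>j\<in>S. eventually (\<lambda>n. v n j < 1/2) sequentially"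
  proof
    fix j assume "j \<in> S"
    with \<open>\<forall>j\<in>S. (\<lambda>n. v n j) \<longlonglongrightarrow> 0\<close> have "(\<lambda>n. v n j) \<longlonglongrightarrow> 0" by blast
    then show "eventually (\<lambda>n. v n j < 1/2) sequentially" by (rule order_tendstoD(2)) simp
  qed
  hence "eventually (\<lambda>n. \<forall>j\<in>S. v n j < 1/2) sequentially"
    using fin by (simp add: eventually_ball_finite)
  then obtain N where N: "\<forall>j\<in>S. v N j < 1/2" by (auto simp: eventually_sequentially)
  define h where "h j = 2 * (\<Sum>n<N. v n j)" for j
  have vnn: "\<And>n j. 0 \<le> v n j" unfolding v_def using mpow_nonneg[OF nn] by (simp add: sum_nonneg)
  have qv: "\<And>n j. j \<in> S \<Longrightarrow> (\<Sum>l\<in>S. q j l * v n l) = v (Suc n) j"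
  proof -
    fix n j assume j: "j \<in> S"
    have "(\<Sum>l\<in>S. q j l * v n l) = (\<Sum>t\<in>S. \<Sum>l\<in>S. q j l * mpow S q n l t)"
      unfolding v_def by (simp add: sum_distrib_left) (rule sum.swap)
    also have "\<dots> = (\<Sum>t\<in>S. mpow S q (Suc n) j t)"
      using mpow_Suc'[OF fin j] unfolding mmult_def by simp
    finally show "(\<Sum>l\<in>S. q j l * v n l) = v (Suc n) j" unfolding v_def .
  qed
  have v0: "\<And>j. j \<in> S \<Longrightarrow> v 0 j = 1" unfolding v_def using fin by (simp add: idm_def[abs_def] sum.delta sum.delta')
  show ?thesis
  proof (intro exI conjI ballI)
    fix j assume j: "j \<in> S"
    show "0 \<le> h j" unfolding h_def using vnn by (simp add: sum_nonneg)
    have "(\<Sum>l\<in>S. (idm j l - q j l) * h l) = (\<Sum>l\<in>S. idm j l * h l) - (\<Sum>l\<in>S. q j l * h l)"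
      by (simp add: left_diff_distrib sum_subtractf)
    also have "(\<Sum>l\<in>S. idm j l * h l) = h j" using j fin unfolding idm_def
      by (subst sum.cong[OF refl, of _ _ "\<lambda>l. if j = l then h l else 0"]) auto
    also have "(\<Sum>l\<in>S. q j l * h l) = 2 * (\<Sum>n<N. v (Suc n) j)"
      unfolding h_def using qv[OF j]
      by (simp add: sum_distrib_left sum_distrib_right mult.assoc mult.left_commute) (subst sum.swap, simp add: sum_distrib_left[symmetric])
    also have "h j - 2 * (\<Sum>n<N. v (Suc n) j) = 2 * (v 0 j - v N j)"
      unfolding h_def using sum_lessThan_telescope[of "\<lambda>n. v n j" N]
      by (simp add: sum_subtractf algebra_simps)
    also have "\<dots> \<ge> 1" using v0[OF j] N j by auto
    finally show "1 \<le> (\<Sum>l\<in>S. (idm j l - q j l) * h l)" .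
  qed
qed

lemma argmin_in:
  fixes Lab :: "'a \<Rightarrow> nat"
  assumes "M \<noteq> {}"
  shows "arg_min Lab (\<lambda>i. i \<in> M) \<in> M \<and> (\<forall>j\<in>M. Lab (arg_min Lab (\<lambda>i. i \<in> M)) \<le> Lab j)"
  using assms arg_min_nat_lemma[of "\<lambda>i. i \<in> M"] by blast

lemma tri_loop_inv:
  fixes Lab :: "'a \<Rightarrow> nat"
  assumes "finite M" "card M \<le> n" "P M tab"
   and step: "\<And>M tab. finite M \<Longrightarrow> M \<noteq> {} \<Longrightarrow> P M tab \<Longrightarrow>
      P (M - {arg_min Lab (\<lambda>i. i \<in> M)}) (tri_step tab (arg_min Lab (\<lambda>i. i \<in> M)) (M - {arg_min Lab (\<lambda>i. i \<in> M)}))"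
  shows "P {} (tri_loop Lab n M tab)"
  using assms(1-3)
proof (induction n arbitrary: M tab)
  case 0
  then show ?case by simp
next
  case (Suc n)
  show ?case
  proof (cases "M = {}")
    case True then show ?thesis using Suc by simp
  next
    case False
    define i where "i = arg_min Lab (\<lambda>i. i \<in> M)"
    have iM: "i \<in> M" using argmin_in[OF False] i_def by blast
    have "P {} (tri_loop Lab n (M - {i}) (tri_step tab i (M - {i})))"
      apply (rule Suc.IH)
      using Suc.prems iM step[OF Suc.prems(1) False Suc.prems(3)] i_def by auto
    then show ?thesis using False i_def by (simp add: Let_def)
  qed
qed

lemma tri_step_fst:
  "fst (tri_step (T, c) i M') j l =
    (if j = i then (1 / T i i) * T i l
     else if j \<in> M' then T j l + (idm j i - T j i) * ((1 / T i i) * T i l) else T j l)"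
  unfolding tri_step_def Let_def by (simp add: idm_def)

lemma tri_step_snd:
  "snd (tri_step (T, c) i M') j =
    (if j = i then (1 / T i i) * c i
     else if j \<in> M' then c j + (idm j i - T j i) * ((1 / T i i) * c i) else c j)"
  unfolding tri_step_def Let_def by (simp add: idm_def)

definition TInv :: "('a \<Rightarrow> nat) \<Rightarrow> 'a set \<Rightarrow> ('a \<Rightarrow> real) \<Rightarrow> 'a set \<Rightarrow> ('a \<Rightarrow> 'a \<Rightarrow> real) \<times> ('a \<Rightarrow> real) \<Rightarrow> bool" where
  "TInv Lab S h M tab \<longleftrightarrow> M \<subseteq> S \<and>
     (\<forall>j\<in>M. \<forall>l\<in>S. l \<noteq> j \<longrightarrow> fst tab j l \<le> 0) \<and>
     (\<forall>j\<in>M. 1 \<le> (\<Sum>l\<in>S. fst tab j l * h l)) \<and>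
     (\<forall>i\<in>S - M. fst tab i i = 1 \<and> (\<forall>l\<in>S. Lab l < Lab i \<longrightarrow> fst tab i l = 0)) \<and>
     (\<forall>j\<in>M. \<forall>p\<in>S - M. fst tab j p = 0)"

lemma Inv_step:
  fixes Lab :: "'a \<Rightarrow> nat"
  assumes fS: "finite S" and h: "\<forall>j\<in>S. 0 \<le> h j"
    and ne: "M \<noteq> {}" and inv: "TInv Lab S h M (T, c)"
    and i_def: "i = arg_min Lab (\<lambda>i. i \<in> M)"
  shows "TInv Lab S h (M - {i}) (tri_step (T, c) i (M - {i}))"
proof -
  have iM: "i \<in> M" and imin: "\<forall>j\<in>M. Lab i \<le> Lab j" using argmin_in[OF ne] i_def by auto
  have MS: "M \<subseteq> S" and a: "\<forall>j\<in>M. \<forall>l\<in>S. l \<noteq> j \<longrightarrow> T j l \<le> 0"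
    and b: "\<forall>j\<in>M. 1 \<le> (\<Sum>l\<in>S. T j l * h l)"
    and c: "\<forall>i\<in>S - M. T i i = 1 \<and> (\<forall>l\<in>S. Lab l < Lab i \<longrightarrow> T i l = 0)"
    and d: "\<forall>j\<in>M. \<forall>p\<in>S - M. T j p = 0"
    using inv unfolding TInv_def by auto
  have iS: "i \<in> S" using iM MS by auto
  have "(\<Sum>l\<in>S. T i l * h l) = T i i * h i + (\<Sum>l\<in>S - {i}. T i l * h l)"
    using fS iS by (simp add: sum.remove)
  moreover have "(\<Sum>l\<in>S - {i}. T i l * h l) \<le> 0"
    using a iM h by (intro sum_nonpos) (auto intro: mult_nonpos_nonneg)
  ultimately have "1 \<le> T i i * h i" using b iM by auto
  have Tii: "T i i > 0"
  proof (rule ccontr)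
    assume "\<not> T i i > 0"
    hence "T i i * h i \<le> 0" using h iS by (simp add: mult_nonpos_nonneg)
    with \<open>1 \<le> T i i * h i\<close> show False by simp
  qed
  define f where "f = 1 / T i i"
  have f: "f > 0" "f * T i i = 1" using Tii unfolding f_def by auto
  let ?T' = "fst (tri_step (T, c) i (M - {i}))"
  have T'i: "\<And>l. ?T' i l = f * T i l" unfolding tri_step_fst f_def by simp
  have T'j: "\<And>j l. j \<in> M - {i} \<Longrightarrow> ?T' j l = T j l + (- T j i) * (f * T i l)"
    unfolding tri_step_fst f_def idm_def by auto
  have T'o: "\<And>j l. j \<notin> M \<Longrightarrow> ?T' j l = T j l"
    unfolding tri_step_fst using iM by auto
  have T'ji: "\<And>j. j \<in> M - {i} \<Longrightarrow> ?T' j i = 0" using T'j f(2)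
    by (simp add: mult.commute)
  show ?thesis
    unfolding TInv_def
  proof (intro conjI ballI impI)
    show "M - {i} \<subseteq> S" using MS by auto
  next
    fix j l assume j: "j \<in> M - {i}" and l: "l \<in> S" "l \<noteq> j"
    show "?T' j l \<le> 0"
    proof (cases "l = i")
      case True then show ?thesis using T'ji j by simp
    next
      case False
      have "T j l \<le> 0" "T i l \<le> 0" "T j i \<le> 0" using a j l iM iS False by auto
      moreover have "f * T i l \<le> 0" using f(1) \<open>T i l \<le> 0\<close> by (simp add: mult_nonneg_nonpos)
      moreover have "(- T j i) * (f * T i l) \<le> 0"
        using \<open>T j i \<le> 0\<close> \<open>f * T i l \<le> 0\<close> mult_nonneg_nonpos[of "- T j i" "f * T i l"] by simp
      ultimately show ?thesis unfolding T'j[OF j] by linarith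
    qed
  next
    fix j assume j: "j \<in> M - {i}"
    have "(\<Sum>l\<in>S. ?T' j l * h l) = (\<Sum>l\<in>S. T j l * h l) + (- T j i) * f * (\<Sum>l\<in>S. T i l * h l)"
      unfolding T'j[OF j] by (simp add: algebra_simps sum.distrib sum_distrib_left sum_subtractf sum_negf)
    moreover have "0 \<le> (- T j i) * f * (\<Sum>l\<in>S. T i l * h l)"
      using a j iM iS f(1) b by (intro mult_nonneg_nonneg) auto
    ultimately show "1 \<le> (\<Sum>l\<in>S. ?T' j l * h l)" using b j by auto
  next
    fix p assume p: "p \<in> S - (M - {i})"
    show "?T' p p = 1"
    proof (cases "p = i")
      case True then show ?thesis using T'i f(2) by simp
    next
      case False then show ?thesis using p c T'o by auto
    qed
  next
    fix p l assume p: "p \<in> S - (M - {i})" and l: "l \<in> S" and lt: "Lab l < Lab p"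
    show "?T' p l = 0"
    proof (cases "p = i")
      case True
      have "l \<notin> M" using imin lt True by force
      then show ?thesis using True T'i d iM l by auto
    next
      case False then show ?thesis using p c T'o l lt by auto
    qed
  next
    fix j p assume j: "j \<in> M - {i}" and p: "p \<in> S - (M - {i})"
    show "?T' j p = 0"
    proof (cases "p = i")
      case True then show ?thesis using T'ji j by simp
    next
      case False then show ?thesis using T'j[OF j] d j p iM by auto
    qed
  qed
qed

lemma tri_final:
  fixes Lab :: "'a \<Rightarrow> nat"
  assumes fS: "finite S" and h: "\<forall>j\<in>S. 0 \<le> h j"
    and q0: "\<forall>i\<in>S. \<forall>j\<in>S. 0 \<le> q i j"
    and hq: "\<forall>j\<in>S. 1 \<le> (\<Sum>l\<in>S. (idm j l - q j l) * h l)"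
  shows "\<forall>i\<in>S. fst (tri_loop Lab (card S) S ((\<lambda>i j. idm i j - q i j), r)) i i = 1 \<and>
     (\<forall>l\<in>S. Lab l < Lab i \<longrightarrow> fst (tri_loop Lab (card S) S ((\<lambda>i j. idm i j - q i j), r)) i l = 0)"
proof -
  have "TInv Lab S h {} (tri_loop Lab (card S) S ((\<lambda>i j. idm i j - q i j), r))"
  proof (rule tri_loop_inv[OF fS order_refl])
    show "TInv Lab S h S ((\<lambda>i j. idm i j - q i j), r)"
      unfolding TInv_def using q0 hq by (auto simp: idm_def)
  next
    fix M tab assume "finite M" "M \<noteq> {}" "TInv Lab S h M tab"
    then show "TInv Lab S h (M - {arg_min Lab (\<lambda>i. i \<in> M)})
        (tri_step tab (arg_min Lab (\<lambda>i. i \<in> M)) (M - {arg_min Lab (\<lambda>i. i \<in> M)}))"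
      using Inv_step[OF fS h, where M=M and T="fst tab" and c="snd tab"] by simp
  qed
  then show ?thesis unfolding TInv_def by auto
qed

lemma tri_eq:
  fixes Lab :: "'a \<Rightarrow> nat"
  assumes fS: "finite S"
    and orig: "\<forall>j\<in>S. Lab j \<le> lam \<longrightarrow> (\<Sum>l\<in>S. (idm j l - q j l) * W l) = r j"
  shows "\<forall>j\<in>S. Lab j \<le> lam \<longrightarrow>
     (\<Sum>l\<in>S. fst (tri_loop Lab (card S) S ((\<lambda>i j. idm i j - q i j), r)) j l * W l)
       = snd (tri_loop Lab (card S) S ((\<lambda>i j. idm i j - q i j), r)) j"
proof -
  let ?P = "\<lambda>M tab. M \<subseteq> S \<and> (\<forall>j\<in>S. Lab j \<le> lam \<longrightarrow> (\<Sum>l\<in>S. fst tab j l * W l) = snd tab j)"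
  have "?P {} (tri_loop Lab (card S) S ((\<lambda>i j. idm i j - q i j), r))"
  proof (rule tri_loop_inv[OF fS order_refl])
    show "?P S ((\<lambda>i j. idm i j - q i j), r)" using orig by auto
  next
    fix M tab assume fM: "finite M" and ne: "M \<noteq> {}" and P: "?P M tab"
    define i where "i = arg_min Lab (\<lambda>i. i \<in> M)"
    have iM: "i \<in> M" and imin: "\<forall>j\<in>M. Lab i \<le> Lab j" using argmin_in[OF ne] i_def by auto
    obtain T c where tab: "tab = (T, c)" by (cases tab)
    have eqs: "\<And>j. j \<in> S \<Longrightarrow> Lab j \<le> lam \<Longrightarrow> (\<Sum>l\<in>S. T j l * W l) = c j" using P tab by auto
    have "\<forall>j\<in>S. Lab j \<le> lam \<longrightarrow> (\<Sum>l\<in>S. fst (tri_step (T, c) i (M - {i})) j l * W l) = snd (tri_step (T, c) i (M - {i})) j"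
    proof (intro ballI impI)
      fix j assume j: "j \<in> S" "Lab j \<le> lam"
      show "(\<Sum>l\<in>S. fst (tri_step (T, c) i (M - {i})) j l * W l) = snd (tri_step (T, c) i (M - {i})) j"
      proof (cases "j = i")
        case True
        then show ?thesis using eqs[OF j]
          by (simp add: tri_step_fst tri_step_snd sum_divide_distrib[symmetric])
      next
        case False
        show ?thesis
        proof (cases "j \<in> M - {i}")
          case True
          have "Lab i \<le> lam" using imin True j by force
          then have ei: "(\<Sum>l\<in>S. T i l * W l) = c i" using eqs iM P by auto
          define a where "a = (idm j i - T j i) * (1 / T i i)"
          have "(\<Sum>l\<in>S. fst (tri_step (T, c) i (M - {i})) j l * W l)
              = (\<Sum>l\<in>S. (T j l + a * T i l) * W l)"
            using True False unfolding tri_step_fst a_def by (intro sum.cong) (auto simp: mult.assoc)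
          also have "\<dots> = (\<Sum>l\<in>S. T j l * W l) + a * (\<Sum>l\<in>S. T i l * W l)"
            by (simp add: algebra_simps sum.distrib sum_distrib_left)
          also have "\<dots> = snd (tri_step (T, c) i (M - {i})) j"
            using True False eqs[OF j] ei unfolding tri_step_snd a_def by (simp add: algebra_simps)
          finally show ?thesis .
        next
          case F2: False
          then show ?thesis using False eqs[OF j] by (simp add: tri_step_fst tri_step_snd)
        qed
      qed
    qed
    then show "?P (M - {arg_min Lab (\<lambda>i. i \<in> M)})
        (tri_step tab (arg_min Lab (\<lambda>i. i \<in> M)) (M - {arg_min Lab (\<lambda>i. i \<in> M)}))"
      using P tab i_def by auto
  qed
  then show ?thesis by auto
qed

locale bsetup =
  fixes K :: nat and Nb :: "nat \<Rightarrow> 'a set" and L :: "'a option \<Rightarrow> nat"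
  assumes K: "K \<ge> 1"
    and fin: "\<forall>k\<in>{1..K}. finite (Nb k) \<and> Nb k \<noteq> {}"
    and disj: "\<forall>k\<in>{1..K}. \<forall>l\<in>{1..K}. k \<noteq> l \<longrightarrow> Nb k \<inter> Nb l = {}"
    and lab: "is_labeling (Nall K Nb) L"
begin

abbreviation "S \<equiv> msts K Nb"
abbreviation "N \<equiv> Nall K Nb"

lemma finN: "finite N" unfolding Nall_def using fin by auto

lemma NbN: "k \<in> {1..K} \<Longrightarrow> Nb k \<subseteq> N" unfolding Nall_def by auto

lemma bof_eq: "k \<in> {1..K} \<Longrightarrow> j \<in> Nb k \<Longrightarrow> bof K Nb j = k"
  unfolding bof_def using disj by (intro the_equality) (simp, metis IntI empty_iff)

lemma finS: "finite S"
proof -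
  have "S \<subseteq> Pow N" unfolding msts_def by auto
  moreover have "finite (Pow N)" using finN by simp
  ultimately show ?thesis by (rule finite_subset)
qed

lemma s_fin: "s \<in> S \<Longrightarrow> finite s"
  unfolding msts_def using finN by (auto intro: finite_subset)

lemma comp_eq: assumes "s \<in> S" "k \<in> {1..K}" shows "s \<inter> Nb k = {comp Nb s k}"
proof -
  have "card (s \<inter> Nb k) = 1" using assms unfolding msts_def by auto
  then obtain x where x: "s \<inter> Nb k = {x}" by (rule card_1_singletonE)
  then have "comp Nb s k = x" unfolding comp_def by simp
  then show ?thesis using x by simp
qed

lemma comp_in: "s \<in> S \<Longrightarrow> k \<in> {1..K} \<Longrightarrow> comp Nb s k \<in> s \<and> comp Nb s k \<in> Nb k"
  using comp_eq[of s k] by blast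

lemma comp_char: "s \<in> S \<Longrightarrow> k \<in> {1..K} \<Longrightarrow> y \<in> s \<Longrightarrow> y \<in> Nb k \<Longrightarrow> comp Nb s k = y"
  by (metis IntI comp_eq singletonD)

lemma Linj: "x \<in> N \<Longrightarrow> y \<in> N \<Longrightarrow> L (Some x) = L (Some y) \<Longrightarrow> x = y"
  using lab unfolding is_labeling_def inj_on_def by auto

lemma comp_ne: "s \<in> S \<Longrightarrow> k \<in> {1..K} \<Longrightarrow> k' \<in> {1..K} \<Longrightarrow> k \<noteq> k' \<Longrightarrow> comp Nb s k \<noteq> comp Nb s k'"
proof
  assume *: "s \<in> S" "k \<in> {1..K}" "k' \<in> {1..K}" "k \<noteq> k'" "comp Nb s k = comp Nb s k'"
  then have "comp Nb s k \<in> Nb k \<inter> Nb k'" using comp_in[of s k] comp_in[of s k'] by simp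
  moreover have "Nb k \<inter> Nb k' = {}" using disj * by blast
  ultimately show False by simp
qed

lemma sS: "s \<in> S \<Longrightarrow> s \<subseteq> N" unfolding msts_def by auto

lemma upd_S:
  assumes s: "s \<in> S" and k: "k \<in> {1..K}" and j: "j \<in> Nb k"
  shows "insert j (s - {comp Nb s k}) \<in> S"
proof -
  let ?x = "comp Nb s k"
  have "insert j (s - {?x}) \<subseteq> N" using sS[OF s] NbN[OF k] j by auto
  moreover have "card (insert j (s - {?x}) \<inter> Nb k') = 1" if k': "k' \<in> {1..K}" for k'
  proof (cases "k' = k")
    case True
    have "insert j (s - {?x}) \<inter> Nb k = {j}" using comp_eq[OF s k] j by auto
    then show ?thesis using True by simp
  next
    case False
    have "j \<notin> Nb k'" "?x \<notin> Nb k'" using disj j comp_in[OF s k] k k' False by blast+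
    then have "insert j (s - {?x}) \<inter> Nb k' = s \<inter> Nb k'" by auto
    then show ?thesis using comp_eq[OF s k'] by simp
  qed
  ultimately show ?thesis unfolding msts_def by auto
qed

lemma upd_notin: "s \<in> S \<Longrightarrow> k \<in> {1..K} \<Longrightarrow> j \<in> Nb k \<Longrightarrow> j \<notin> s - {comp Nb s k}"
  using comp_eq[of s k] by blast

lemma upd_comp_k: "s \<in> S \<Longrightarrow> k \<in> {1..K} \<Longrightarrow> j \<in> Nb k \<Longrightarrow> comp Nb (insert j (s - {comp Nb s k})) k = j"
  using upd_S comp_char by (meson insertI1)

lemma upd_comp_o:
  assumes "s \<in> S" "k \<in> {1..K}" "j \<in> Nb k" "k' \<in> {1..K}" "k' \<noteq> k"
  shows "comp Nb (insert j (s - {comp Nb s k})) k' = comp Nb s k'"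
proof -
  have "comp Nb s k' \<in> insert j (s - {comp Nb s k})" "comp Nb s k' \<in> Nb k'"
    using comp_in[OF assms(1,4)] comp_ne[OF assms(1,2,4)] assms(5) by auto
  then show ?thesis using comp_char[OF upd_S[OF assms(1-3)] assms(4)] by blast
qed

lemma upd_self: "s \<in> S \<Longrightarrow> k \<in> {1..K} \<Longrightarrow> insert (comp Nb s k) (s - {comp Nb s k}) = s"
  using comp_in[of s k] by blast

lemma upd_upd:
  assumes "s \<in> S" "k \<in> {1..K}" "j \<in> Nb k"
  shows "insert l (insert j (s - {comp Nb s k}) - {j}) = insert l (s - {comp Nb s k})"
  using upd_notin[OF assms] by auto

lemma prio_in:
  assumes s: "s \<in> S"
  shows "prio K Nb L s \<in> {1..K} \<and> (\<forall>k'\<in>{1..K}. k' \<noteq> prio K Nb L s \<longrightarrow>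
     L (Some (comp Nb s (prio K Nb L s))) < L (Some (comp Nb s k')))"
proof -
  let ?f = "\<lambda>k. L (Some (comp Nb s k))"
  have "1 \<in> {1..K}" using K by auto
  from arg_min_nat_lemma[of "\<lambda>k. k \<in> {1..K}", OF this, of ?f]
  have p: "prio K Nb L s \<in> {1..K}" "\<forall>y\<in>{1..K}. ?f (prio K Nb L s) \<le> ?f y"
    unfolding prio_def by auto
  have "?f (prio K Nb L s) < ?f k'" if "k' \<in> {1..K}" "k' \<noteq> prio K Nb L s" for k'
  proof -
    have "comp Nb s k' \<noteq> comp Nb s (prio K Nb L s)" using comp_ne[OF s] p that by metis
    moreover have "comp Nb s k' \<in> N" "comp Nb s (prio K Nb L s) \<in> N" using comp_in[OF s] p that sS[OF s] by blast+
    ultimately have "?f (prio K Nb L s) \<noteq> ?f k'" using Linj by metis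
    then show ?thesis using p that by (simp add: order_le_neq_trans)
  qed
  then show ?thesis using p by blast
qed

lemma prio_char:
  assumes s: "s \<in> S" and k: "k \<in> {1..K}"
    and lt: "\<forall>k'\<in>{1..K}. k' \<noteq> k \<longrightarrow> L (Some (comp Nb s k)) < L (Some (comp Nb s k'))"
  shows "prio K Nb L s = k"
proof (rule ccontr)
  assume ne: "prio K Nb L s \<noteq> k"
  have "1 \<in> {1..K}" using K by auto
  from arg_min_nat_lemma[of "\<lambda>k. k \<in> {1..K}", OF this, of "\<lambda>k. L (Some (comp Nb s k))"]
  have "L (Some (comp Nb s (prio K Nb L s))) \<le> L (Some (comp Nb s k))" unfolding prio_def using k by auto
  moreover have "L (Some (comp Nb s k)) < L (Some (comp Nb s (prio K Nb L s)))"
    using lt prio_in[OF s] ne by auto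
  ultimately show False by simp
qed

lemma Qpol_sum:
  assumes s: "s \<in> S" and k: "\<delta> s \<in> {1..K}"
  shows "(\<Sum>t\<in>S. Qpol Nb q \<delta> s t * g t)
     = (\<Sum>j\<in>Nb (\<delta> s). q (comp Nb s (\<delta> s)) j * g (insert j (s - {comp Nb s (\<delta> s)})))"
proof -
  let ?k = "\<delta> s" let ?x = "comp Nb s ?k"
  let ?u = "\<lambda>j. insert j (s - {?x})"
  have U: "?u ` Nb ?k \<subseteq> S" using upd_S[OF s k] by auto
  have inj: "inj_on ?u (Nb ?k)"
  proof (rule inj_onI)
    fix j j' assume "j \<in> Nb ?k" "j' \<in> Nb ?k" "?u j = ?u j'"
    then show "j = j'" using upd_notin[OF s k] by blast
  qed
  have Qu: "Qpol Nb q \<delta> s (?u j) = q ?x j" if j: "j \<in> Nb ?k" for j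
  proof -
    have th: "(THE j'. j' \<in> Nb ?k \<and> ?u j = ?u j') = j"
    proof (rule the_equality)
      show "j \<in> Nb ?k \<and> ?u j = ?u j" using j by simp
    next
      fix j' assume "j' \<in> Nb ?k \<and> ?u j = ?u j'"
      then show "j' = j" using inj j inj_onD by metis
    qed
    have ex: "\<exists>j'\<in>Nb ?k. ?u j = ?u j'" using j by blast
    show ?thesis unfolding Qpol_def Let_def using th ex by (simp only: if_True)
  qed
  have Q0: "Qpol Nb q \<delta> s t = 0" if "t \<in> S - ?u ` Nb ?k" for t
  proof -
    have "\<not> (\<exists>j\<in>Nb ?k. t = ?u j)" using that by blast
    then show ?thesis unfolding Qpol_def Let_def by (simp only: if_False)
  qed
  have "(\<Sum>t\<in>S. Qpol Nb q \<delta> s t * g t) = (\<Sum>t\<in>?u ` Nb ?k. Qpol Nb q \<delta> s t * g t)"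
    using finS U Q0 by (intro sum.mono_neutral_right) simp_all
  also have "\<dots> = (\<Sum>j\<in>Nb ?k. Qpol Nb q \<delta> s (?u j) * g (?u j))"
    by (simp add: sum.reindex[OF inj])
  also have "\<dots> = (\<Sum>j\<in>Nb ?k. q ?x j * g (?u j))" using Qu by simp
  finally show ?thesis .
qed

end
lemma sum_idm: "finite S \<Longrightarrow> s \<in> S \<Longrightarrow> (\<Sum>t\<in>S. idm s t * f t) = f s"
  unfolding idm_def by (subst sum.cong[OF refl, of _ _ "\<lambda>t. if s = t then f t else 0"]) auto

lemma sum_IminusA: "finite S \<Longrightarrow> s \<in> S \<Longrightarrow> (\<Sum>t\<in>S. (idm s t - A s t) * f t) = f s - (\<Sum>t\<in>S. A s t * f t)"
  by (simp add: left_diff_distrib sum_subtractf sum_idm)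

lemma inv_unique:
  assumes "finite S" "inverse_on S A B" "\<forall>s\<in>S. (\<Sum>t\<in>S. A s t * V t) = R s" "s \<in> S"
  shows "mvmult S B R s = V s"
proof -
  have "mvmult S B R s = (\<Sum>t\<in>S. B s t * (\<Sum>u\<in>S. A t u * V u))"
    unfolding mvmult_def using assms(3) by simp
  also have "\<dots> = (\<Sum>u\<in>S. mmult S B A s u * V u)"
    unfolding mmult_def by (simp add: sum_distrib_left sum_distrib_right mult.assoc) (rule sum.swap)
  also have "\<dots> = (\<Sum>u\<in>S. idm s u * V u)"
    using assms(2,4) unfolding inverse_on_def by simp
  also have "\<dots> = V s" by (rule sum_idm[OF assms(1,4)])
  finally show ?thesis .
qed

lemma inv_solves:
  assumes "finite S" "inverse_on S A B" "s \<in> S"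
  shows "(\<Sum>t\<in>S. A s t * mvmult S B R t) = R s"
proof -
  have "(\<Sum>t\<in>S. A s t * mvmult S B R t) = (\<Sum>u\<in>S. mmult S A B s u * R u)"
    unfolding mmult_def mvmult_def by (simp add: sum_distrib_left sum_distrib_right mult.assoc) (rule sum.swap)
  also have "\<dots> = (\<Sum>u\<in>S. idm s u * R u)"
    using assms(2,3) unfolding inverse_on_def by simp
  also have "\<dots> = R s" by (rule sum_idm[OF assms(1,3)])
  finally show ?thesis .
qed

lemma value_vec_eq:
  assumes "finite S" "invertible_on S (\<lambda>s t. idm s t - Q s t)"
    "\<forall>s\<in>S. (\<Sum>t\<in>S. (idm s t - Q s t) * V t) = R s" "s \<in> S"
  shows "value_vec S Q R s = V s"
proof -
  have "inverse_on S (\<lambda>s t. idm s t - Q s t) (minv S (\<lambda>s t. idm s t - Q s t))"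
    using assms(2) unfolding invertible_on_def minv_def by (rule someI_ex)
  then show ?thesis unfolding value_vec_def by (rule inv_unique[OF assms(1) _ assms(3,4)])
qed

context bsetup
begin

lemma phi_upd:
  assumes s: "s \<in> S" and k: "k \<in> {1..K}" and j: "j \<in> Nb k"
  shows "(\<Sum>y\<in>insert j (s - {comp Nb s k}). L (Some y)) + L (Some (comp Nb s k))
       = (\<Sum>y\<in>s. L (Some y)) + L (Some j)"
proof -
  let ?x = "comp Nb s k"
  have fs: "finite s" using s_fin[OF s] .
  have "(\<Sum>y\<in>s. L (Some y)) = L (Some ?x) + (\<Sum>y\<in>s - {?x}. L (Some y))"
    using sum.remove[OF fs, of ?x] comp_in[OF s k] by simp
  moreover have "(\<Sum>y\<in>insert j (s - {?x}). L (Some y)) = L (Some j) + (\<Sum>y\<in>s - {?x}. L (Some y))"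
    using fs upd_notin[OF s k j] by simp
  ultimately show ?thesis by simp
qed

lemma main:
  fixes q :: "'a \<Rightarrow> 'a \<Rightarrow> real" and r :: "'a \<Rightarrow> real"
  assumes C: "hypC K Nb q r"
  shows "invertible_on (msts K Nb)
           (\<lambda>s t. idm s t - Qpol Nb (qtil K Nb L q r) (prio K Nb L) s t)
       \<and> (\<forall>s\<in>msts K Nb.
            value_vec (msts K Nb) (Qpol Nb (qtil K Nb L q r) (prio K Nb L))
                                  (Rpol Nb (rtil K Nb L q r) (prio K Nb L)) s
          = value_vec (msts K Nb) (Qpol Nb q (prio K Nb L)) (Rpol Nb r (prio K Nb L)) s)"
proof -
  let ?pi = "prio K Nb L"
  let ?Q0 = "Qpol Nb q ?pi" let ?R0 = "Rpol Nb r ?pi"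
  let ?Qt = "Qpol Nb (qtil K Nb L q r) ?pi" let ?Rt = "Rpol Nb (rtil K Nb L q r) ?pi"
  let ?u = "\<lambda>s k j. insert j (s - {comp Nb s k})"
  have qk: "\<forall>k\<in>{1..K}. (\<forall>i\<in>Nb k. \<forall>j\<in>Nb k. 0 \<le> q i j) \<and> transient (Nb k) q"
    using C unfolding hypC_def by blast
  have finNb: "\<And>k. k \<in> {1..K} \<Longrightarrow> finite (Nb k)" using fin by blast
  have "\<forall>k\<in>{1..K}. \<exists>h. (\<forall>j\<in>Nb k. 0 \<le> h j) \<and> (\<forall>j\<in>Nb k. 1 \<le> (\<Sum>l\<in>Nb k. (idm j l - q j l) * h l))"
  proof
    fix k assume k: "k \<in> {1..K}"
    have "(\<forall>i\<in>Nb k. \<forall>j\<in>Nb k. 0 \<le> q i j)" "transient (Nb k) q" using qk k by auto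
    then show "\<exists>h. (\<forall>j\<in>Nb k. 0 \<le> h j) \<and> (\<forall>j\<in>Nb k. 1 \<le> (\<Sum>l\<in>Nb k. (idm j l - q j l) * h l))"
      by (rule h_exists[OF finNb[OF k]])
  qed
  from bchoice[OF this] obtain hh where hh0: "\<forall>k\<in>{1..K}. (\<forall>j\<in>Nb k. 0 \<le> hh k j) \<and>
      (\<forall>j\<in>Nb k. 1 \<le> (\<Sum>l\<in>Nb k. (idm j l - q j l) * hh k l))" by (elim exE)
  have hh: "\<And>k. k \<in> {1..K} \<Longrightarrow> (\<forall>j\<in>Nb k. 0 \<le> hh k j) \<and>
      (\<forall>j\<in>Nb k. 1 \<le> (\<Sum>l\<in>Nb k. (idm j l - q j l) * hh k l))"
    using hh0 by (rule bspec)
  have hq: "\<And>k j. k \<in> {1..K} \<Longrightarrow> j \<in> Nb k \<Longrightarrow> (\<Sum>l\<in>Nb k. q j l * hh k l) \<le> hh k j - 1"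
  proof -
    fix k j assume k: "k \<in> {1..K}" and j: "j \<in> Nb k"
    have "1 \<le> (\<Sum>l\<in>Nb k. (idm j l - q j l) * hh k l)" using hh[OF k] j by blast
    also have "\<dots> = hh k j - (\<Sum>l\<in>Nb k. q j l * hh k l)" using sum_IminusA[OF finNb[OF k] j] .
    finally show "(\<Sum>l\<in>Nb k. q j l * hh k l) \<le> hh k j - 1" by simp
  qed
  have hge1: "\<And>k j. k \<in> {1..K} \<Longrightarrow> j \<in> Nb k \<Longrightarrow> 1 \<le> hh k j"
  proof -
    fix k j assume k: "k \<in> {1..K}" and j: "j \<in> Nb k"
    have "0 \<le> (\<Sum>l\<in>Nb k. q j l * hh k l)" using qk k j hh[OF k] by (intro sum_nonneg mult_nonneg_nonneg) auto
    then show "1 \<le> hh k j" using hq[OF k j] by simp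
  qed
  define Tr where "Tr k = triangularizer L Nb q r k" for k
  have tri_tri: "\<And>k i. k \<in> {1..K} \<Longrightarrow> i \<in> Nb k \<Longrightarrow> fst (Tr k) i i = 1 \<and>
      (\<forall>l\<in>Nb k. L (Some l) < L (Some i) \<longrightarrow> fst (Tr k) i l = 0)"
  proof -
    fix k i assume k: "k \<in> {1..K}" and i: "i \<in> Nb k"
    have q0: "\<forall>i\<in>Nb k. \<forall>j\<in>Nb k. 0 \<le> q i j" using qk k by auto
    have "\<forall>i\<in>Nb k. fst (Tr k) i i = 1 \<and> (\<forall>l\<in>Nb k. L (Some l) < L (Some i) \<longrightarrow> fst (Tr k) i l = 0)"
      unfolding Tr_def triangularizer_def
      by (rule tri_final[OF finNb[OF k] conjunct1[OF hh[OF k]] q0 conjunct2[OF hh[OF k]]])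
    then show "fst (Tr k) i i = 1 \<and> (\<forall>l\<in>Nb k. L (Some l) < L (Some i) \<longrightarrow> fst (Tr k) i l = 0)"
      using i by (rule bspec)
  qed
  have qt_zero: "\<And>k x j. k \<in> {1..K} \<Longrightarrow> x \<in> Nb k \<Longrightarrow> j \<in> Nb k \<Longrightarrow> L (Some j) \<le> L (Some x)
      \<Longrightarrow> qtil K Nb L q r x j = 0"
  proof -
    fix k x j assume k: "k \<in> {1..K}" and x: "x \<in> Nb k" and j: "j \<in> Nb k" and le: "L (Some j) \<le> L (Some x)"
    have qt: "qtil K Nb L q r x j = idm x j - fst (Tr k) x j"
      unfolding qtil_def Tr_def using bof_eq[OF k x] by simp
    show "qtil K Nb L q r x j = 0"
    proof (cases "j = x")
      case True then show ?thesis using qt tri_tri[OF k x] by (simp add: idm_def)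
    next
      case False
      have "L (Some j) \<noteq> L (Some x)" using Linj NbN[OF k] x j False by blast
      then have "L (Some j) < L (Some x)" using le by simp
      then show ?thesis using qt tri_tri[OF k x] j False by (simp add: idm_def)
    qed
  qed
  have pis: "\<And>s. s \<in> S \<Longrightarrow> ?pi s \<in> {1..K}" using prio_in by blast


  have invt: "invertible_on S (\<lambda>s t. idm s t - ?Qt s t)"
  proof (rule inj_invertible[OF finS])
    fix X assume X0: "\<forall>s\<in>S. (\<Sum>t\<in>S. (idm s t - ?Qt s t) * X t) = 0"
    define phi where "phi s = (\<Sum>y\<in>s. L (Some y))" for s
    show "\<forall>s\<in>S. X s = 0"
    proof (rule ccontr)
      assume nz: "\<not> (\<forall>s\<in>S. X s = 0)"
      define Z where "Z = {s\<in>S. X s \<noteq> 0}"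
      have Zne: "Z \<noteq> {}" using nz unfolding Z_def by blast
      have Zfin: "finite Z" using finS Z_def by simp
      have "Max (phi ` Z) \<in> phi ` Z"
        using Zfin Zne by (intro Max_in) auto
      then obtain s where sZ: "s \<in> Z" and sm: "phi s = Max (phi ` Z)"
        by (metis imageE)
      have smax: "\<forall>s'\<in>Z. phi s' \<le> phi s"
        unfolding sm using Zfin by (intro ballI Max_ge) auto
      have s: "s \<in> S" using sZ Z_def by simp
      let ?k = "?pi s" let ?x = "comp Nb s ?k"
      have k: "?k \<in> {1..K}" using pis[OF s] .
      have x: "?x \<in> Nb ?k" using comp_in[OF s k] by blast
      have "X s = (\<Sum>t\<in>S. ?Qt s t * X t)"
        using X0 s sum_IminusA[OF finS s, of ?Qt X] by simp
      also have "\<dots> = (\<Sum>j\<in>Nb ?k. qtil K Nb L q r ?x j * X (?u s ?k j))"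
        by (rule Qpol_sum[where \<delta>="prio K Nb L", OF s k])
      also have "\<dots> = 0"
      proof (rule sum.neutral, rule ballI)
        fix j assume j: "j \<in> Nb ?k"
        show "qtil K Nb L q r ?x j * X (?u s ?k j) = 0"
        proof (cases "L (Some j) \<le> L (Some ?x)")
          case True then show ?thesis using qt_zero[OF k x j] by simp
        next
          case False
          have gt: "phi (?u s ?k j) > phi s" using phi_upd[OF s k j] False unfolding phi_def by linarith
          have "?u s ?k j \<notin> Z"
          proof
            assume "?u s ?k j \<in> Z"
            then have "phi (?u s ?k j) \<le> phi s" using smax by blast
            with gt show False by simp
          qed
          then have "X (?u s ?k j) = 0" using upd_S[OF s k j] Z_def by simp
          then show ?thesis by simp
        qed
      qed
      finally show False using sZ Z_def by simp
    qed
  qed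
  have QX: "\<And>s g. s \<in> S \<Longrightarrow> (\<Sum>t\<in>S. ?Q0 s t * g t)
      = (\<Sum>j\<in>Nb (?pi s). q (comp Nb s (?pi s)) j * g (?u s (?pi s) j))"
  proof -
    fix s :: "'a set" and g :: "'a set \<Rightarrow> real" assume s: "s \<in> S"
    show "(\<Sum>t\<in>S. ?Q0 s t * g t) = (\<Sum>j\<in>Nb (?pi s). q (comp Nb s (?pi s)) j * g (?u s (?pi s) j))"
      by (rule Qpol_sum[where \<delta>="prio K Nb L", OF s pis[OF s]])
  qed
  have inv0: "invertible_on S (\<lambda>s t. idm s t - ?Q0 s t)"
  proof (rule inj_invertible[OF finS])
    fix X assume X0: "\<forall>s\<in>S. (\<Sum>t\<in>S. (idm s t - ?Q0 s t) * X t) = 0"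
    define H where "H s = (\<Prod>k\<in>{1..K}. hh k (comp Nb s k))" for s
    have Hge1: "1 \<le> H s" if s: "s \<in> S" for s
      unfolding H_def
    proof (rule prod_ge_1)
      fix k assume k: "k \<in> {1..K}"
      show "1 \<le> hh k (comp Nb s k)" using hge1[OF k] comp_in[OF s k] by blast
    qed
    have XQ: "X s = (\<Sum>t\<in>S. ?Q0 s t * X t)" if s: "s \<in> S" for s
      using X0 s sum_IminusA[OF finS s, of ?Q0 X] by simp
    have QH: "(\<Sum>j\<in>Nb (?pi s). q (comp Nb s (?pi s)) j * H (?u s (?pi s) j)) \<le> H s - 1"
      if s: "s \<in> S" for s
    proof -
      let ?k = "?pi s" let ?x = "comp Nb s ?k"
      have k: "?k \<in> {1..K}" using pis[OF s] .
      have x: "?x \<in> Nb ?k" using comp_in[OF s k] by blast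
      define P where "P = (\<Prod>k'\<in>{1..K} - {?k}. hh k' (comp Nb s k'))"
      have P1: "1 \<le> P" unfolding P_def
      proof (rule prod_ge_1)
        fix k' assume k': "k' \<in> {1..K} - {?k}"
        have k'': "k' \<in> {1..K}" using k' by simp
        show "1 \<le> hh k' (comp Nb s k')" using hge1[OF k''] comp_in[OF s k''] by blast
      qed
      have Hs: "H s = hh ?k ?x * P" unfolding H_def P_def
        using prod.remove[of "{1..K}" ?k "\<lambda>k. hh k (comp Nb s k)"] k by simp
      have Hu: "H (?u s ?k j) = hh ?k j * P" if j: "j \<in> Nb ?k" for j
      proof -
        have "H (?u s ?k j) = hh ?k (comp Nb (?u s ?k j) ?k) * (\<Prod>k'\<in>{1..K} - {?k}. hh k' (comp Nb (?u s ?k j) k'))"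
          unfolding H_def using prod.remove[of "{1..K}" ?k "\<lambda>k. hh k (comp Nb (?u s ?k j) k)"] k by simp
        also have "comp Nb (?u s ?k j) ?k = j" using upd_comp_k[OF s k j] .
        also have "(\<Prod>k'\<in>{1..K} - {?k}. hh k' (comp Nb (?u s ?k j) k')) = P"
          unfolding P_def using upd_comp_o[OF s k j] by (intro prod.cong) auto
        finally show ?thesis .
      qed
      have "(\<Sum>j\<in>Nb ?k. q ?x j * H (?u s ?k j)) = (\<Sum>j\<in>Nb ?k. q ?x j * hh ?k j) * P"
        using Hu by (simp add: sum_distrib_right mult.assoc)
      also have "\<dots> \<le> (hh ?k ?x - 1) * P"
        using hq[OF k x] P1 by (intro mult_right_mono) auto
      also have "\<dots> = H s - P" using Hs by (simp add: algebra_simps)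
      also have "\<dots> \<le> H s - 1" using P1 by simp
      finally show ?thesis .
    qed
    have absX: "\<bar>X s\<bar> \<le> (\<Sum>j\<in>Nb (?pi s). q (comp Nb s (?pi s)) j * \<bar>X (?u s (?pi s) j)\<bar>)"
      if s: "s \<in> S" for s
    proof -
      let ?k = "?pi s" let ?x = "comp Nb s ?k"
      have k: "?k \<in> {1..K}" using pis[OF s] .
      have x: "?x \<in> Nb ?k" using comp_in[OF s k] by blast
      have "\<bar>X s\<bar> = \<bar>\<Sum>j\<in>Nb ?k. q ?x j * X (?u s ?k j)\<bar>" using XQ[OF s] QX[OF s] by simp
      also have "\<dots> \<le> (\<Sum>j\<in>Nb ?k. \<bar>q ?x j * X (?u s ?k j)\<bar>)" by (rule sum_abs)
      also have "\<dots> = (\<Sum>j\<in>Nb ?k. q ?x j * \<bar>X (?u s ?k j)\<bar>)"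
      proof (rule sum.cong[OF refl])
        fix j assume j: "j \<in> Nb ?k"
        have "0 \<le> q ?x j" using qk k x j by blast
        then show "\<bar>q ?x j * X (?u s ?k j)\<bar> = q ?x j * \<bar>X (?u s ?k j)\<bar>" by (simp add: abs_mult)
      qed
      finally show ?thesis .
    qed
    show "\<forall>s\<in>S. X s = 0"
    proof (cases "S = {}")
      case True then show ?thesis by simp
    next
      case Sne: False
      define c where "c = Max ((\<lambda>s. \<bar>X s\<bar> / H s) ` S)"
      have Hpos: "0 < H s" if "s \<in> S" for s using Hge1[OF that] by linarith
      have cge: "\<bar>X t\<bar> \<le> c * H t" if t: "t \<in> S" for t
      proof -
        have "\<bar>X t\<bar> / H t \<le> c" unfolding c_def using finS t by (intro Max_ge) auto
        then show ?thesis using Hpos[OF t] by (simp add: divide_le_eq)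
      qed
      have "c \<in> (\<lambda>s. \<bar>X s\<bar> / H s) ` S" unfolding c_def using finS Sne by (intro Max_in) auto
      then obtain s0 where s0: "s0 \<in> S" and cs0: "c = \<bar>X s0\<bar> / H s0"
        by (elim imageE) blast
      have c0: "0 \<le> c" unfolding cs0 using Hpos[OF s0] by simp
      have Xs0: "\<bar>X s0\<bar> = c * H s0" unfolding cs0 using Hpos[OF s0] by simp
      let ?k = "?pi s0" let ?x = "comp Nb s0 ?k"
      have k: "?k \<in> {1..K}" using pis[OF s0] .
      have x: "?x \<in> Nb ?k" using comp_in[OF s0 k] by blast
      have "c * H s0 \<le> (\<Sum>j\<in>Nb ?k. q ?x j * \<bar>X (?u s0 ?k j)\<bar>)" using absX[OF s0] by (simp only: Xs0)
      also have "\<dots> \<le> (\<Sum>j\<in>Nb ?k. q ?x j * (c * H (?u s0 ?k j)))"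
      proof (rule sum_mono)
        fix j assume j: "j \<in> Nb ?k"
        have "0 \<le> q ?x j" using qk k x j by blast
        moreover have "\<bar>X (?u s0 ?k j)\<bar> \<le> c * H (?u s0 ?k j)" using cge[OF upd_S[OF s0 k j]] .
        ultimately show "q ?x j * \<bar>X (?u s0 ?k j)\<bar> \<le> q ?x j * (c * H (?u s0 ?k j))"
          by (rule mult_left_mono[rotated])
      qed
      also have "\<dots> = c * (\<Sum>j\<in>Nb ?k. q ?x j * H (?u s0 ?k j))"
        by (simp add: sum_distrib_left algebra_simps)
      also have "\<dots> \<le> c * (H s0 - 1)" using QH[OF s0] c0 by (rule mult_left_mono)
      finally have "c \<le> 0" by (simp add: algebra_simps)
      then have "c = 0" using c0 by simp
      then show ?thesis using cge by simp
    qed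
  qed
  have B0: "inverse_on S (\<lambda>s t. idm s t - ?Q0 s t) (minv S (\<lambda>s t. idm s t - ?Q0 s t))"
    using inv0 unfolding invertible_on_def minv_def by (rule someI_ex)
  define V where "V = value_vec S ?Q0 ?R0"
  have AV: "V s - (\<Sum>t\<in>S. ?Q0 s t * V t) = ?R0 s" if s: "s \<in> S" for s
  proof -
    have "(\<Sum>t\<in>S. (idm s t - ?Q0 s t) * V t) = ?R0 s"
      unfolding V_def value_vec_def by (rule inv_solves[OF finS B0 s])
    then show ?thesis using sum_IminusA[OF finS s, of ?Q0 V] by simp
  qed
  have key: "\<forall>s\<in>S. (\<Sum>t\<in>S. (idm s t - ?Qt s t) * V t) = ?Rt s"
  proof
    fix s assume s: "s \<in> S"
    let ?k = "?pi s" let ?x = "comp Nb s ?k"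
    have k: "?k \<in> {1..K}" using pis[OF s] .
    have x: "?x \<in> Nb ?k" using comp_in[OF s k] by blast
    define W where "W j = V (?u s ?k j)" for j
    have orig: "\<forall>j\<in>Nb ?k. L (Some j) \<le> L (Some ?x) \<longrightarrow> (\<Sum>l\<in>Nb ?k. (idm j l - q j l) * W l) = r j"
    proof (intro ballI impI)
      fix j assume j: "j \<in> Nb ?k" and le: "L (Some j) \<le> L (Some ?x)"
      let ?s' = "?u s ?k j"
      have s': "?s' \<in> S" using upd_S[OF s k j] .
      have cj: "comp Nb ?s' ?k = j" using upd_comp_k[OF s k j] .
      have pi': "?pi ?s' = ?k"
      proof (rule prio_char[OF s' k], intro ballI impI)
        fix k' assume k': "k' \<in> {1..K}" and ne: "k' \<noteq> ?k"
        have "L (Some ?x) < L (Some (comp Nb s k'))" using prio_in[OF s] k' ne by blast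
        then show "L (Some (comp Nb ?s' ?k)) < L (Some (comp Nb ?s' k'))"
          using cj le upd_comp_o[OF s k j k' ne] by simp
      qed
      have "V ?s' - (\<Sum>t\<in>S. ?Q0 ?s' t * V t) = ?R0 ?s'" by (rule AV[OF s'])
      moreover have "?R0 ?s' = r j" unfolding Rpol_def using pi' cj by simp
      moreover have "(\<Sum>t\<in>S. ?Q0 ?s' t * V t) = (\<Sum>l\<in>Nb ?k. q j l * W l)"
        using QX[OF s', of V] pi' cj upd_upd[OF s k j] unfolding W_def by simp
      moreover have "(\<Sum>l\<in>Nb ?k. (idm j l - q j l) * W l) = W j - (\<Sum>l\<in>Nb ?k. q j l * W l)"
        by (rule sum_IminusA[OF finNb[OF k] j])
      ultimately show "(\<Sum>l\<in>Nb ?k. (idm j l - q j l) * W l) = r j" unfolding W_def by simp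
    qed
    have teq: "(\<Sum>l\<in>Nb ?k. fst (Tr ?k) ?x l * W l) = snd (Tr ?k) ?x"
      using tri_eq[OF finNb[OF k], of "\<lambda>i. L (Some i)" "L (Some ?x)" q W r] orig x
      unfolding Tr_def triangularizer_def by blast
    have "(\<Sum>t\<in>S. (idm s t - ?Qt s t) * V t) = V s - (\<Sum>t\<in>S. ?Qt s t * V t)"
      by (rule sum_IminusA[OF finS s])
    also have "(\<Sum>t\<in>S. ?Qt s t * V t) = (\<Sum>j\<in>Nb ?k. qtil K Nb L q r ?x j * W j)"
      unfolding W_def by (rule Qpol_sum[where \<delta>="prio K Nb L", OF s k])
    also have "\<dots> = (\<Sum>j\<in>Nb ?k. (idm ?x j - fst (Tr ?k) ?x j) * W j)"
      unfolding qtil_def Tr_def using bof_eq[OF k x] by simp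
    also have "\<dots> = W ?x - (\<Sum>j\<in>Nb ?k. fst (Tr ?k) ?x j * W j)"
      by (rule sum_IminusA[OF finNb[OF k] x])
    also have "W ?x = V s" unfolding W_def using upd_self[OF s k] by simp
    finally have "(\<Sum>t\<in>S. (idm s t - ?Qt s t) * V t) = snd (Tr ?k) ?x" using teq by simp
    also have "\<dots> = ?Rt s" unfolding Rpol_def rtil_def Tr_def using bof_eq[OF k x] by simp
    finally show "(\<Sum>t\<in>S. (idm s t - ?Qt s t) * V t) = ?Rt s" .
  qed
  show ?thesis
  proof
    show "invertible_on S (\<lambda>s t. idm s t - ?Qt s t)" by (rule invt)
    show "\<forall>s\<in>S. value_vec S ?Qt ?Rt s = value_vec S ?Q0 ?R0 s"
      using value_vec_eq[OF finS invt key] unfolding V_def by blast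
  qed
qed

end

theorem proposition3p3:
  fixes K :: nat and Nb :: "nat \<Rightarrow> 'a set" and q :: "'a \<Rightarrow> 'a \<Rightarrow> real"
    and r :: "'a \<Rightarrow> real" and L :: "'a option \<Rightarrow> nat"
  assumes K: "K \<ge> 1"
    and fin: "\<forall>k\<in>{1..K}. finite (Nb k) \<and> Nb k \<noteq> {}"
    and disj: "\<forall>k\<in>{1..K}. \<forall>l\<in>{1..K}. k \<noteq> l \<longrightarrow> Nb k \<inter> Nb l = {}"
    and C: "hypC K Nb q r"
    and lab: "is_labeling (Nall K Nb) L"
  shows "invertible_on (msts K Nb)
           (\<lambda>s t. idm s t - Qpol Nb (qtil K Nb L q r) (prio K Nb L) s t)
       \<and> (\<forall>s\<in>msts K Nb.
            value_vec (msts K Nb) (Qpol Nb (qtil K Nb L q r) (prio K Nb L))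
                                  (Rpol Nb (rtil K Nb L q r) (prio K Nb L)) s
          = value_vec (msts K Nb) (Qpol Nb q (prio K Nb L)) (Rpol Nb r (prio K Nb L)) s)"
proof -
  interpret bsetup K Nb L using K fin disj lab by unfold_locales
  show ?thesis by (rule main[OF C])
qed

end
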